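(* For every integer $n\ge 2$ there exists a double-$n$ string with diameter at most $5\lceil n/13\rceil-1$. Consequently $\delta(n)\le 5\lceil n/13\rceil -1$ for all $n\ge 2$, and $\limsup_{n\to\infty}\delta(n)/n\le 5/13$.
   Context: A double-$n$ string is a string of length $2n$ over an alphabet of $n$ symbols in which each symbol appears exactly twice. Positions in the string are numbered $1,\dots,2n$. The distance between two distinct symbols is the minimum, over an occurrence of the first symbol and an occurrence of the second, of the absolute difference of their positions. The diameter of a double-$n$ string ($n\ge 2$) is the maximum of the distance over all pairs of distinct symbols. $\delta(n)$ denotes the minimum diameter over all double-$n$ strings. *)

theory Defs
  imports Complex_Main "HOL-Library.Liminf_Limsup" "HOL-Library.Extended_Real"
begin

text \<open>A string is a list; the paper's position p (1-based) is list index p-1.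
  The alphabet of n symbols is {0..<n}.\<close>

definition double_string :: "nat \<Rightarrow> nat list \<Rightarrow> bool" where
  "double_string n xs \<longleftrightarrow> length xs = 2 * n \<and> set xs \<subseteq> {..<n} \<and>
     (\<forall>a<n. card {i. i < length xs \<and> xs ! i = a} = 2)"

definition sym_dist :: "nat list \<Rightarrow> nat \<Rightarrow> nat \<Rightarrow> nat" where
  "sym_dist xs a b = Min {nat \<bar>int i - int j\<bar> | i j.
      i < length xs \<and> j < length xs \<and> xs ! i = a \<and> xs ! j = b}"

definition diameter :: "nat \<Rightarrow> nat list \<Rightarrow> nat" where
  "diameter n xs = Max {sym_dist xs a b | a b. a < n \<and> b < n \<and> a \<noteq> b}"

definition delta :: "nat \<Rightarrow> nat" where
  "delta n = Min {diameter n xs | xs. double_string n xs}"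

end

theory Submission
  imports Defs
begin
definition base :: "nat list" where
 "base = [3, 6, 12, 9, 1, 8, 2, 7, 5, 4, 0, 12, 6, 11, 7, 10, 2, 8, 3, 5, 11, 0, 4, 9, 1, 10]"

lemma base_len: "length base = 26" by (simp add: base_def)
lemma base_lt: "p < 26 \<Longrightarrow> base ! p < 13"
proof -
  have "\<forall>p\<in>set [0..<26]. base ! p < 13" unfolding base_def by code_simp
  then show "p < 26 \<Longrightarrow> base ! p < 13" by simp
qed
lemma base_cnt: "s < 13 \<Longrightarrow> card {p. p < 26 \<and> base ! p = s} = 2"
proof -
  have "\<forall>s\<in>set [0..<13]. length (filter (\<lambda>x. x = s) base) = 2" unfolding base_def by code_simp
  moreover assume "s < 13"
  ultimately have "length (filter (\<lambda>x. x = s) base) = 2" by simp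
  then show ?thesis by (simp add: length_filter_conv_card base_len)
qed
lemma base_close: "s < 13 \<Longrightarrow> t < 13 \<Longrightarrow> s \<noteq> t \<Longrightarrow>
   \<exists>p<26. \<exists>q<26. base ! p = s \<and> base ! q = t \<and> p \<le> q + 4 \<and> q \<le> p + 4"
proof -
  have "\<forall>s\<in>set [0..<13]. \<forall>t\<in>set [0..<13]. s \<noteq> t \<longrightarrow>
    (\<exists>p\<in>set [0..<26]. \<exists>q\<in>set [0..<26]. base ! p = s \<and> base ! q = t \<and> p \<le> q + 4 \<and> q \<le> p + 4)"
    unfolding base_def by code_simp
  moreover assume "s < 13" "t < 13" "s \<noteq> t"
  ultimately obtain p q where "p \<in> set [0..<26]" "q \<in> set [0..<26]" "base ! p = s" "base ! q = t" "p \<le> q + 4" "q \<le> p + 4"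
    by (metis atLeastLessThan_iff set_upt zero_le)
  then show ?thesis by auto
qed

definition bl :: "nat \<Rightarrow> nat list" where
  "bl k = map (\<lambda>m. base ! (m div k) + 13 * (m mod k)) [0..<26*k]"

lemma bl_len: "length (bl k) = 26 * k" by (simp add: bl_def)
lemma bl_nth: "m < 26 * k \<Longrightarrow> bl k ! m = base ! (m div k) + 13 * (m mod k)"
  by (simp add: bl_def)

lemma bl_cnt:
  assumes k: "k > 0" and a: "a < 13 * k"
  shows "card {m. m < 26 * k \<and> bl k ! m = a} = 2"
proof -
  have i: "a div 13 < k" using a by (simp add: div_less_iff_less_mult mult.commute)
  have eq: "{m. m < 26 * k \<and> bl k ! m = a} = (\<lambda>p. p * k + a div 13) ` {p. p < 26 \<and> base ! p = a mod 13}"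
  proof (rule set_eqI, rule iffI)
    fix m assume "m \<in> {m. m < 26 * k \<and> bl k ! m = a}"
    then have m: "m < 26 * k" and e: "base ! (m div k) + 13 * (m mod k) = a" by (auto simp: bl_nth)
    have md: "m div k < 26" using m k by (simp add: div_less_iff_less_mult)
    have lt: "base ! (m div k) < 13" using base_lt md by blast
    have "a mod 13 = base ! (m div k)" using e lt by (metis mod_mult_self2 mod_less)
    moreover have "a div 13 = m mod k" using e lt by (metis add.commute div_mult_self2 div_less zero_neq_numeral add_0)
    ultimately show "m \<in> (\<lambda>p. p * k + a div 13) ` {p. p < 26 \<and> base ! p = a mod 13}"
      using md by (auto intro!: image_eqI[of _ _ "m div k"])
  next
    fix m assume "m \<in> (\<lambda>p. p * k + a div 13) ` {p. p < 26 \<and> base ! p = a mod 13}"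
    then obtain p where p: "p < 26" "base ! p = a mod 13" and m: "m = p * k + a div 13" by auto
    have "m < 26 * k"
    proof -
      have "p * k + a div 13 < p * k + k" using i by simp
      also have "\<dots> = Suc p * k" by simp
      also have "\<dots> \<le> 26 * k" using p(1) by (intro mult_le_mono1) simp
      finally show ?thesis using m by simp
    qed
    moreover have "m div k = p" "m mod k = a div 13" using m i k by auto
    ultimately show "m \<in> {m. m < 26 * k \<and> bl k ! m = a}" using p by (simp add: bl_nth)
  qed
  have inj: "inj_on (\<lambda>p. p * k + a div 13) {p. p < 26 \<and> base ! p = a mod 13}"
    using k by (auto simp: inj_on_def)
  show ?thesis unfolding eq card_image[OF inj] by (rule base_cnt) simp
qed

lemma bl_close:
  assumes k: "k > 0" and a: "a < 13 * k" and b: "b < 13 * k" and ab: "a \<noteq> b"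
  shows "\<exists>m1<26*k. \<exists>m2<26*k. bl k ! m1 = a \<and> bl k ! m2 = b \<and> m1 + 1 \<le> m2 + 5 * k \<and> m2 + 1 \<le> m1 + 5 * k"
proof -
  have i: "a div 13 < k" using a by (simp add: div_less_iff_less_mult mult.commute)
  have j: "b div 13 < k" using b by (simp add: div_less_iff_less_mult mult.commute)
  have pos: "\<And>p c. p < 26 \<Longrightarrow> c < k \<Longrightarrow> p * k + c < 26 * k"
  proof -
    fix p c :: nat assume "p < 26" "c < k"
    have "p * k + c < p * k + k" using \<open>c < k\<close> by simp
    also have "\<dots> = Suc p * k" by simp
    also have "\<dots> \<le> 26 * k" using \<open>p < 26\<close> by (intro mult_le_mono1) simp
    finally show "p * k + c < 26 * k" .
  qed
  have val: "\<And>p c. p < 26 \<Longrightarrow> c < k \<Longrightarrow> bl k ! (p * k + c) = base ! p + 13 * c"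
    using k pos by (simp add: bl_nth)
  have ea: "a = a mod 13 + 13 * (a div 13)" and eb: "b = b mod 13 + 13 * (b div 13)" by simp_all
  show ?thesis
  proof (cases "a mod 13 = b mod 13")
    case True
    have "card {p. p < 26 \<and> base ! p = a mod 13} = 2" by (rule base_cnt) simp
    then obtain p where p: "p < 26" "base ! p = a mod 13"
      by (metis (mono_tags, lifting) card.empty empty_Collect_eq zero_neq_numeral)
    show ?thesis
      apply (rule exI[of _ "p * k + a div 13"], rule conjI, rule pos[OF p(1) i])
      apply (rule exI[of _ "p * k + b div 13"], rule conjI, rule pos[OF p(1) j])
      using val[OF p(1) i] val[OF p(1) j] p True i j ea eb by auto
  next
    case False
    obtain p q where pq: "p < 26" "q < 26" "base ! p = a mod 13" "base ! q = b mod 13" "p \<le> q + 4" "q \<le> p + 4"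
      using base_close[of "a mod 13" "b mod 13"] False by auto
    have 1: "p * k \<le> q * k + 4 * k" using mult_le_mono1[OF pq(5), of k] by (simp add: algebra_simps)
    have 2: "q * k \<le> p * k + 4 * k" using mult_le_mono1[OF pq(6), of k] by (simp add: algebra_simps)
    show ?thesis
      apply (rule exI[of _ "p * k + a div 13"], rule conjI, rule pos[OF pq(1) i])
      apply (rule exI[of _ "q * k + b div 13"], rule conjI, rule pos[OF pq(2) j])
      using val[OF pq(1) i] val[OF pq(2) j] pq i j ea eb 1 2 by auto
  qed
qed

lemma filt_pos:
  assumes "m < length L" "P (L ! m)"
  shows "length (filter P (take m L)) < length (filter P L) \<and> filter P L ! length (filter P (take m L)) = L ! m"
proof -
  have "L = take m L @ L ! m # drop (Suc m) L" using assms(1) by (simp add: Cons_nth_drop_Suc)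
  then have "filter P L = filter P (take m L) @ L ! m # filter P (drop (Suc m) L)"
    using assms(2) by (metis filter.simps(2) filter_append)
  then show ?thesis by (simp add: nth_append)
qed

lemma filt_mono:
  assumes "m1 \<le> m2"
  shows "length (filter P (take m1 L)) \<le> length (filter P (take m2 L)) \<and>
         length (filter P (take m2 L)) \<le> length (filter P (take m1 L)) + (m2 - m1)"
proof -
  have "take m2 L = take m1 L @ take (m2 - m1) (drop m1 L)" using assms take_add[of m1 "m2 - m1" L] by simp
  then have "length (filter P (take m2 L)) = length (filter P (take m1 L)) + length (filter P (take (m2 - m1) (drop m1 L)))"
    by (metis filter_append length_append)
  moreover have "length (filter P (take (m2 - m1) (drop m1 L))) \<le> m2 - m1"
    by (metis length_filter_le length_take min.bounded_iff order_refl dual_order.trans)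
  ultimately show ?thesis by simp
qed

lemma construct:
  assumes n: "n \<ge> 2" and k: "k = (n + 12) div 13"
  shows "\<exists>xs. double_string n xs \<and> diameter n xs \<le> 5 * k - 1"
proof -
  have k0: "k > 0" using n k by simp
  have nk: "n \<le> 13 * k" using k by simp
  define xs where "xs = filter (\<lambda>c. c < n) (bl k)"
  have cnt: "card {i. i < length xs \<and> xs ! i = a} = 2" if a: "a < n" for a
  proof -
    have "card {i. i < length xs \<and> xs ! i = a} = length (filter (\<lambda>x. x = a) xs)"
      by (simp add: length_filter_conv_card)
    also have "filter (\<lambda>x. x = a) xs = filter (\<lambda>x. x = a) (bl k)"
      unfolding xs_def filter_filter using a by (metis (mono_tags, lifting))
    also have "length \<dots> = card {m. m < 26 * k \<and> bl k ! m = a}"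
      by (simp add: length_filter_conv_card bl_len)
    also have "\<dots> = 2" using bl_cnt[OF k0] a nk by simp
    finally show ?thesis .
  qed
  have setx: "set xs \<subseteq> {..<n}" by (auto simp: xs_def)
  have len: "length xs = 2 * n"
  proof -
    have "length xs = (\<Sum>a\<in>{..<n}. count_list xs a)" using sum_count_set[OF setx] by simp
    also have "\<dots> = (\<Sum>a\<in>{..<n}. 2)"
    proof (rule sum.cong)
      fix a assume "a \<in> {..<n}"
      then have "card {i. i < length xs \<and> xs ! i = a} = 2" using cnt by simp
      moreover have "{i. i < length xs \<and> a = xs ! i} = {i. i < length xs \<and> xs ! i = a}" by auto
      ultimately show "count_list xs a = 2"
        by (simp add: count_list_eq_length_filter length_filter_conv_card)
    qed simp
    finally show ?thesis by simp
  qed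
  have ds: "double_string n xs" unfolding double_string_def using len setx cnt by auto
  have sd: "sym_dist xs a b \<le> 5 * k - 1" if ab: "a < n" "b < n" "a \<noteq> b" for a b
  proof -
    obtain m1 m2 where m: "m1 < 26 * k" "m2 < 26 * k" "bl k ! m1 = a" "bl k ! m2 = b"
      "m1 + 1 \<le> m2 + 5 * k" "m2 + 1 \<le> m1 + 5 * k"
      using bl_close[OF k0, of a b] ab nk by auto
    define P where "P = (\<lambda>c::nat. c < n)"
    define f where "f = (\<lambda>m. length (filter P (take m (bl k))))"
    have f1: "f m1 < length xs" "xs ! f m1 = a"
      using filt_pos[of m1 "bl k" P] m ab unfolding f_def xs_def P_def by (auto simp: bl_len)
    have f2: "f m2 < length xs" "xs ! f m2 = b"
      using filt_pos[of m2 "bl k" P] m ab unfolding f_def xs_def P_def by (auto simp: bl_len)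
    have dist: "nat \<bar>int (f m1) - int (f m2)\<bar> \<le> 5 * k - 1"
    proof (cases "m1 \<le> m2")
      case True
      then show ?thesis using filt_mono[OF True, of P "bl k"] m unfolding f_def by linarith
    next
      case False
      then have m21: "m2 \<le> m1" by simp
      then show ?thesis using filt_mono[OF m21, of P "bl k"] m unfolding f_def by linarith
    qed
    have fin: "finite {nat \<bar>int i - int j\<bar> | i j. i < length xs \<and> j < length xs \<and> xs ! i = a \<and> xs ! j = b}"
      by (rule finite_subset[of _ "(\<lambda>(i,j). nat \<bar>int i - int j\<bar>) ` ({..<length xs} \<times> {..<length xs})"]) auto
    have "sym_dist xs a b \<le> nat \<bar>int (f m1) - int (f m2)\<bar>"
      unfolding sym_dist_def by (rule Min_le[OF fin]) (use f1 f2 in blast)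
    then show ?thesis using dist by simp
  qed
  have "diameter n xs \<le> 5 * k - 1"
  proof -
    have fin: "finite {sym_dist xs a b | a b. a < n \<and> b < n \<and> a \<noteq> b}"
      by (rule finite_subset[of _ "(\<lambda>(a,b). sym_dist xs a b) ` ({..<n} \<times> {..<n})"]) auto
    have ne: "{sym_dist xs a b | a b. a < n \<and> b < n \<and> a \<noteq> b} \<noteq> {}"
    proof -
      have "sym_dist xs 0 1 \<in> {sym_dist xs a b | a b. a < n \<and> b < n \<and> a \<noteq> b}" using n by fastforce
      then show ?thesis by blast
    qed
    show ?thesis unfolding diameter_def using fin ne sd by (auto simp: Max_le_iff)
  qed
  then show ?thesis using ds by blast
qed

lemma ceil_k: "\<lceil>real n / 13\<rceil> = int ((n + 12) div 13)"
proof -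
  define k where "k = (n + 12) div 13"
  have "n \<le> 13 * k" "13 * k < n + 13" unfolding k_def by simp_all
  then have "real n \<le> 13 * real k" "13 * real k < real n + 13" by linarith+
  then show ?thesis unfolding k_def[symmetric] by (simp add: ceiling_eq_iff)
qed

theorem theorem3p7:
  shows "(\<forall>n::nat. n \<ge> 2 \<longrightarrow> (\<exists>xs. double_string n xs \<and>
            real (diameter n xs) \<le> 5 * real_of_int \<lceil>real n / 13\<rceil> - 1))
       \<and> (\<forall>n::nat. n \<ge> 2 \<longrightarrow> real (delta n) \<le> 5 * real_of_int \<lceil>real n / 13\<rceil> - 1)
       \<and> limsup (\<lambda>n. ereal (real (delta n) / real n)) \<le> ereal (5 / 13)"
proof -
  have A: "\<exists>xs. double_string n xs \<and> real (diameter n xs) \<le> 5 * real_of_int \<lceil>real n / 13\<rceil> - 1"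
    if n: "n \<ge> 2" for n :: nat
  proof -
    define k where "k = (n + 12) div 13"
    have k0: "k \<ge> 1" using n unfolding k_def by simp
    obtain xs where "double_string n xs" "diameter n xs \<le> 5 * k - 1" using construct[OF n k_def] by blast
    moreover have "real (5 * k - 1) = 5 * real k - 1" using k0 by simp
    ultimately show ?thesis unfolding ceil_k k_def[symmetric]
      by (metis of_int_of_nat_eq of_nat_le_iff)
  qed
  have B: "real (delta n) \<le> 5 * real_of_int \<lceil>real n / 13\<rceil> - 1" if n: "n \<ge> 2" for n :: nat
  proof -
    obtain xs where xs: "double_string n xs" "real (diameter n xs) \<le> 5 * real_of_int \<lceil>real n / 13\<rceil> - 1"
      using A[OF n] by blast
    have fin: "finite {diameter n xs | xs. double_string n xs}"
      by (rule finite_subset[of _ "diameter n ` {xs. set xs \<subseteq> {..<n} \<and> length xs = 2 * n}"])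
        (auto simp: double_string_def intro!: finite_lists_length_eq)
    have "delta n \<le> diameter n xs" unfolding delta_def by (rule Min_le[OF fin]) (use xs in blast)
    then show ?thesis using xs by linarith
  qed
  have C: "limsup (\<lambda>n. ereal (real (delta n) / real n)) \<le> ereal (5 / 13)"
  proof -
    have ev: "eventually (\<lambda>n. ereal (real (delta n) / real n) \<le> ereal (5/13 + 4 / real n)) sequentially"
      unfolding eventually_sequentially
    proof (intro exI allI impI)
      fix n :: nat assume n: "n \<ge> 2"
      have c: "real_of_int \<lceil>real n / 13\<rceil> < real n / 13 + 1" by linarith
      have "real (delta n) \<le> 5 * (real n / 13) + 4" using B[OF n] c by linarith
      then have "real (delta n) / real n \<le> (5 * (real n / 13) + 4) / real n"
        by (intro divide_right_mono) auto
      also have "\<dots> = 5/13 + 4 / real n" using n by (simp add: field_simps)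
      finally show "ereal (real (delta n) / real n) \<le> ereal (5/13 + 4 / real n)" by simp
    qed
    have lim: "(\<lambda>n. ereal (5/13 + 4 / real n)) \<longlonglongrightarrow> ereal (5/13)"
      proof (intro tendsto_ereal)
      have "(\<lambda>n. 5/13 + 4 / real n) \<longlonglongrightarrow> 5/13 + 0"
        by (intro tendsto_add tendsto_const lim_const_over_n)
      then show "(\<lambda>n. 5/13 + 4 / real n) \<longlonglongrightarrow> 5/13" by simp
    qed
    have "limsup (\<lambda>n. ereal (5/13 + 4 / real n)) = ereal (5/13)"
      by (rule lim_imp_Limsup[OF _ lim]) simp
    then show ?thesis using Limsup_mono[OF ev] by simp
  qed
  show ?thesis using A B C by blast
qed
end
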